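(* The ranges of $\mathcal{A}_1$ and $\mathcal{A}_2$ coincide: $\{\mathcal{A}_1(\nu):\nu\in\mathfrak{M}_L^1(\mathbb{R}^d)\}=\{\mathcal{A}_2(\nu):\nu\in\mathfrak{M}_L^2(\mathbb{R}^d)\}$.
   Context: A Lévy measure on $\mathbb{R}^d$ is a measure $\nu$ with $\nu(\{0\})=0$ and $\int(1\wedge|x|^2)\nu(\mathrm{d}x)<\infty$; their class is $\mathfrak{M}_L^2(\mathbb{R}^d)$, and $\mathfrak{M}_L^1(\mathbb{R}^d)$ is the class of Lévy measures with $\int(1\wedge|x|)\nu(\mathrm{d}x)<\infty$. For $s>0$ set $a_1(r;s)=2\pi^{-1}(s-r^2)^{-1/2}$ for $0<r<s^{1/2}$ and $0$ otherwise; $a_2(r;s)=2\pi^{-1}(s^2-r^2)^{-1/2}$ for $0<r<s$ and $0$ otherwise. For $k=1,2$, $\mathcal{A}_k(\nu)(B)=\int_{\mathbb{R}^d\setminus\{0\}}\nu(\mathrm{d}x)\int_0^\infty a_k(r;|x|)1_B(rx/|x|)\,\mathrm{d}r$, $B$ Borel; its domain (measures mapped to Lévy measures) is $\mathfrak{M}_L^k(\mathbb{R}^d)$. *)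

theory Defs
  imports "HOL-Analysis.Analysis"
begin

definition levy_measures_2 :: "('a::euclidean_space) measure set" where
  "levy_measures_2 = {\<nu>. sets \<nu> = sets borel \<and> emeasure \<nu> {0} = 0 \<and>
      (\<integral>\<^sup>+ x. ennreal (min 1 (norm x ^ 2)) \<partial>\<nu>) < \<infinity>}"

definition levy_measures_1 :: "('a::euclidean_space) measure set" where
  "levy_measures_1 = {\<nu>. sets \<nu> = sets borel \<and> emeasure \<nu> {0} = 0 \<and>
      (\<integral>\<^sup>+ x. ennreal (min 1 (norm x)) \<partial>\<nu>) < \<infinity>}"

definition a1 :: "real \<Rightarrow> real \<Rightarrow> real" where
  "a1 r s = (if 0 < r \<and> r < sqrt s then 2 / pi * (s - r^2) powr (-1/2) else 0)"

definition a2 :: "real \<Rightarrow> real \<Rightarrow> real" where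
  "a2 r s = (if 0 < r \<and> r < s then 2 / pi * (s^2 - r^2) powr (-1/2) else 0)"

definition Atrans :: "(real \<Rightarrow> real \<Rightarrow> real) \<Rightarrow> ('a::euclidean_space) measure \<Rightarrow> 'a measure" where
  "Atrans a \<nu> = measure_of UNIV (sets borel)
     (\<lambda>B. \<integral>\<^sup>+ x. indicator (UNIV - {0}) x *
        (\<integral>\<^sup>+ r. indicator {0<..} r * ennreal (a r (norm x)) * indicator B (r *\<^sub>R (x /\<^sub>R norm x)) \<partial>lborel) \<partial>\<nu>)"

definition A1 :: "('a::euclidean_space) measure \<Rightarrow> 'a measure" where
  "A1 = Atrans a1"

definition A2 :: "('a::euclidean_space) measure \<Rightarrow> 'a measure" where
  "A2 = Atrans a2"

end

theory Submission
  imports Defs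
begin

lemma a2_meas[measurable]:
  assumes [measurable]: "f \<in> borel_measurable M" "g \<in> borel_measurable M"
  shows "(\<lambda>x. a2 (f x) (g x)) \<in> borel_measurable M"
  unfolding a2_def power2_eq_square by measurable

lemma g_meas:
  assumes [measurable]: "B \<in> sets borel"
  shows "(\<lambda>y::'a::euclidean_space. indicator (UNIV - {0}) y *
        (\<integral>\<^sup>+ r. indicator {0<..} r * ennreal (a2 r (norm y)) * indicator B (r *\<^sub>R (y /\<^sub>R norm y)) \<partial>lborel)) \<in> borel_measurable borel"
  by measurable

definition T :: "'a::euclidean_space \<Rightarrow> 'a" where "T x = sqrt (norm x) *\<^sub>R (x /\<^sub>R norm x)"
definition S :: "'a::euclidean_space \<Rightarrow> 'a" where "S y = norm y *\<^sub>R y"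

lemma T_meas[measurable]: "T \<in> borel_measurable borel"
  unfolding T_def by measurable
lemma S_meas[measurable]: "S \<in> borel_measurable borel"
  unfolding S_def by measurable

lemma norm_T: "norm (T x) = sqrt (norm x)"
  by (cases "x = 0") (auto simp: T_def)

lemma T_zero_iff: "T x = 0 \<longleftrightarrow> x = 0"
  using norm_T[of x] by (metis norm_eq_zero real_sqrt_eq_zero_cancel_iff)

lemma norm_S: "norm (S y) = norm y ^ 2"
  by (simp add: S_def power2_eq_square)

lemma S_zero_iff: "S y = 0 \<longleftrightarrow> y = 0"
  by (simp add: S_def)

lemma dir_T: "x \<noteq> 0 \<Longrightarrow> T x /\<^sub>R norm (T x) = x /\<^sub>R norm x"
  by (simp add: norm_T T_def field_simps)

lemma T_S: "T (S y) = y"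
  by (cases "y = 0") (auto simp: T_def S_def norm_mult power2_eq_square field_simps)

lemma a1_a2: "0 \<le> s \<Longrightarrow> a1 r s = a2 r (sqrt s)"
  by (simp add: a1_def a2_def)

lemma key:
  fixes \<nu> :: "'a::euclidean_space measure"
  assumes sets: "sets \<nu> = sets borel"
  shows "A1 \<nu> = A2 (distr \<nu> borel T)"
  unfolding A1_def A2_def Atrans_def
proof (rule measure_of_eq)
  show "sets borel \<subseteq> Pow UNIV" by simp
  fix B :: "'a set" assume "B \<in> sigma_sets UNIV (sets borel)"
  then have B[measurable]: "B \<in> sets borel"
    using sets.sigma_sets_eq[of "borel :: 'a measure"] by simp
  have Tm: "T \<in> measurable \<nu> borel"
    using measurable_cong_sets[OF sets refl] T_meas by blast
  have gm: "(\<lambda>y::'a. indicator (UNIV - {0}) y *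
        (\<integral>\<^sup>+ r. indicator {0<..} r * ennreal (a2 r (norm y)) * indicator B (r *\<^sub>R (y /\<^sub>R norm y)) \<partial>lborel))
      \<in> borel_measurable (distr \<nu> borel T)"
    unfolding measurable_cong_sets[OF sets_distr refl] using g_meas[OF B] .
  show "(\<integral>\<^sup>+ x. indicator (UNIV - {0}) x *
        (\<integral>\<^sup>+ r. indicator {0<..} r * ennreal (a1 r (norm x)) * indicator B (r *\<^sub>R (x /\<^sub>R norm x)) \<partial>lborel) \<partial>\<nu>) =
    (\<integral>\<^sup>+ x. indicator (UNIV - {0}) x *
        (\<integral>\<^sup>+ r. indicator {0<..} r * ennreal (a2 r (norm x)) * indicator B (r *\<^sub>R (x /\<^sub>R norm x)) \<partial>lborel) \<partial>distr \<nu> borel T)"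
  proof (subst nn_integral_distr[OF Tm gm], rule nn_integral_cong)
    fix x :: 'a
    show "indicator (UNIV - {0}) x *
        (\<integral>\<^sup>+ r. indicator {0<..} r * ennreal (a1 r (norm x)) * indicator B (r *\<^sub>R (x /\<^sub>R norm x)) \<partial>lborel) =
      indicator (UNIV - {0}) (T x) *
        (\<integral>\<^sup>+ r. indicator {0<..} r * ennreal (a2 r (norm (T x))) * indicator B (r *\<^sub>R (T x /\<^sub>R norm (T x))) \<partial>lborel)"
    proof (cases "x = 0")
      case True
      then show ?thesis by (simp add: T_zero_iff)
    next
      case False
      have i: "indicator (UNIV - {0}) (T x) = (indicator (UNIV - {0}) x :: ennreal)"
        using False T_zero_iff[of x] by (simp add: indicator_def)
      have d: "T x /\<^sub>R norm (T x) = x /\<^sub>R norm x" using dir_T[OF False] .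
      have a: "\<And>r. a2 r (norm (T x)) = a1 r (norm x)"
        unfolding norm_T by (rule a1_a2[symmetric]) simp
      show ?thesis unfolding i d a ..
    qed
  qed
qed

lemma distr_T_levy:
  fixes \<nu> :: "'a::euclidean_space measure"
  assumes "\<nu> \<in> levy_measures_1"
  shows "distr \<nu> borel T \<in> levy_measures_2"
proof -
  have sets: "sets \<nu> = sets borel" and z: "emeasure \<nu> {0} = 0"
    and fin: "(\<integral>\<^sup>+ x. ennreal (min 1 (norm x)) \<partial>\<nu>) < \<infinity>"
    using assms by (auto simp: levy_measures_1_def)
  have Tm: "T \<in> measurable \<nu> borel"
    using measurable_cong_sets[OF sets refl] T_meas by blast
  have pre: "T -` {0} \<inter> space \<nu> = {0}"
    using sets_eq_imp_space_eq[OF sets] by (auto simp: T_zero_iff)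
  have "emeasure (distr \<nu> borel T) {0} = 0"
    by (subst emeasure_distr[OF Tm]) (auto simp: pre z)
  moreover have "(\<integral>\<^sup>+ x. ennreal (min 1 (norm x ^ 2)) \<partial>distr \<nu> borel T) =
      (\<integral>\<^sup>+ x. ennreal (min 1 (norm x)) \<partial>\<nu>)"
  proof (subst nn_integral_distr[OF Tm])
    show "(\<lambda>x::'a. ennreal (min 1 (norm x ^ 2))) \<in> borel_measurable (distr \<nu> borel T)"
      unfolding measurable_cong_sets[OF sets_distr refl] by measurable
    show "(\<integral>\<^sup>+ x. ennreal (min 1 (norm (T x) ^ 2)) \<partial>\<nu>) = (\<integral>\<^sup>+ x. ennreal (min 1 (norm x)) \<partial>\<nu>)"
      by (simp add: norm_T)
  qed
  ultimately show ?thesis using fin by (simp add: levy_measures_2_def)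
qed

lemma distr_S_levy:
  fixes \<mu> :: "'a::euclidean_space measure"
  assumes "\<mu> \<in> levy_measures_2"
  shows "distr \<mu> borel S \<in> levy_measures_1"
proof -
  have sets: "sets \<mu> = sets borel" and z: "emeasure \<mu> {0} = 0"
    and fin: "(\<integral>\<^sup>+ x. ennreal (min 1 (norm x ^ 2)) \<partial>\<mu>) < \<infinity>"
    using assms by (auto simp: levy_measures_2_def)
  have Sm: "S \<in> measurable \<mu> borel"
    using measurable_cong_sets[OF sets refl] S_meas by blast
  have pre: "S -` {0} \<inter> space \<mu> = {0}"
    using sets_eq_imp_space_eq[OF sets] by (auto simp: S_zero_iff)
  have "emeasure (distr \<mu> borel S) {0} = 0"
    by (subst emeasure_distr[OF Sm]) (auto simp: pre z)
  moreover have "(\<integral>\<^sup>+ x. ennreal (min 1 (norm x)) \<partial>distr \<mu> borel S) =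
      (\<integral>\<^sup>+ x. ennreal (min 1 (norm x ^ 2)) \<partial>\<mu>)"
  proof (subst nn_integral_distr[OF Sm])
    show "(\<lambda>x::'a. ennreal (min 1 (norm x))) \<in> borel_measurable (distr \<mu> borel S)"
      unfolding measurable_cong_sets[OF sets_distr refl] by measurable
    show "(\<integral>\<^sup>+ x. ennreal (min 1 (norm (S x))) \<partial>\<mu>) = (\<integral>\<^sup>+ x. ennreal (min 1 (norm x ^ 2)) \<partial>\<mu>)"
      by (simp add: norm_S)
  qed
  ultimately show ?thesis using fin by (simp add: levy_measures_1_def)
qed

lemma distr_TS:
  fixes \<mu> :: "'a::euclidean_space measure"
  assumes sets: "sets \<mu> = sets borel"
  shows "distr (distr \<mu> borel S) borel T = \<mu>"
proof -
  have Sm: "S \<in> measurable \<mu> borel"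
    using measurable_cong_sets[OF sets refl] S_meas by blast
  have "distr (distr \<mu> borel S) borel T = distr \<mu> borel (T \<circ> S)"
    by (rule distr_distr[OF T_meas Sm])
  also have "\<dots> = distr \<mu> borel (\<lambda>x. x)"
    by (rule distr_cong) (auto simp: T_S)
  also have "\<dots> = \<mu>"
    using distr_id2[of borel \<mu>] sets by simp
  finally show ?thesis .
qed

theorem proposition2p10:
  shows "A1 ` (levy_measures_1 :: ('a::euclidean_space) measure set) = A2 ` (levy_measures_2 :: 'a measure set)"
proof
  show "A1 ` (levy_measures_1 :: 'a measure set) \<subseteq> A2 ` levy_measures_2"
  proof
    fix m assume "m \<in> A1 ` (levy_measures_1 :: 'a measure set)"
    then obtain \<nu> :: "'a measure" where n: "\<nu> \<in> levy_measures_1" and m: "m = A1 \<nu>" by blast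
    have "sets \<nu> = sets borel" using n by (simp add: levy_measures_1_def)
    then have "m = A2 (distr \<nu> borel T)" using key m by blast
    then show "m \<in> A2 ` levy_measures_2" using distr_T_levy[OF n] by blast
  qed
  show "A2 ` (levy_measures_2 :: 'a measure set) \<subseteq> A1 ` levy_measures_1"
  proof
    fix m assume "m \<in> A2 ` (levy_measures_2 :: 'a measure set)"
    then obtain \<mu> :: "'a measure" where n: "\<mu> \<in> levy_measures_2" and m: "m = A2 \<mu>" by blast
    have s: "sets \<mu> = sets borel" using n by (simp add: levy_measures_2_def)
    have s2: "sets (distr \<mu> borel S) = sets borel" by simp
    have "m = A1 (distr \<mu> borel S)"
      using key[OF s2] distr_TS[OF s] m by simp
    then show "m \<in> A1 ` levy_measures_1" using distr_S_levy[OF n] by blast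
  qed
qed

end
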